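(* Let $X_1,X_2,\dots$ be i.i.d. $\mathbb{Z}$-valued random variables and $S_n=\sum_{j=1}^nX_j$. For every $N\in\mathbb{N}\setminus\{1\}$ and all $y_1,\dots,y_N\in\mathbb{Z}$ with $|y_n-y_{n+1}|\le1$ for $n=1,\dots,N-1$, $$\frac{1}{\sum_{i=0}^{N-1}p^{(N)}_i}\le\mathbb{P}^{(N)}_{\mathcal{R}}\Big(\bigcup_{n=1}^N\{\mathcal{R}^{(N)}_n=(y_n\bmod N)\}\Big)\le\frac{2}{\sum_{i=0}^{N-1}q^{(N)}_i},$$ where $p^{(N)}_0=q^{(N)}_0=1$ and, for $i\in\mathbb{N}$, $p^{(N)}_i=\max_{y\in\mathbb{Z},|y|\le i}P\{S_i\in[y]_N\}$, $q^{(N)}_i=\min_{y\in\mathbb{Z},|y|\le i}P\{S_i\in[y]_N\}$.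
   Context: $X_j$ live on $(\Omega,\mathcal{F},P)$. $[y]_N=\{y+kN:k\in\mathbb{Z}\}$. For $N\in\mathbb{N}$, $X^{(N)}_0$ is uniform on $\{0,\dots,N-1\}$ under $(\Omega_N,\mathcal{F}_N,\mu_N)$; $(b\bmod N)$ is the remainder of $b\in\mathbb{Z}$ divided by $N$; $\mathcal{R}^{(N)}_n=(X^{(N)}_0+S_n\bmod N)$; $\mathbb{P}^{(N)}_{\mathcal{R}}=\mu_N\times P$ (product measure). *)

theory Defs
  imports "HOL-Probability.Probability"
begin

definition psum :: "(nat \<Rightarrow> 'a \<Rightarrow> int) \<Rightarrow> nat \<Rightarrow> 'a \<Rightarrow> int" where
  "psum X n \<omega> = (\<Sum>j\<in>{1..n}. X j \<omega>)"

definition resclass :: "int \<Rightarrow> int \<Rightarrow> int set" where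
  "resclass N y = {y + k * N | k. True}"

definition pmax :: "'a measure \<Rightarrow> (nat \<Rightarrow> 'a \<Rightarrow> int) \<Rightarrow> nat \<Rightarrow> nat \<Rightarrow> real" where
  "pmax M X N i = (if i = 0 then 1 else
     Max ((\<lambda>y. measure M {\<omega> \<in> space M. psum X i \<omega> \<in> resclass (int N) y}) ` {- int i .. int i}))"

definition qmin :: "'a measure \<Rightarrow> (nat \<Rightarrow> 'a \<Rightarrow> int) \<Rightarrow> nat \<Rightarrow> nat \<Rightarrow> real" where
  "qmin M X N i = (if i = 0 then 1 else
     Min ((\<lambda>y. measure M {\<omega> \<in> space M. psum X i \<omega> \<in> resclass (int N) y}) ` {- int i .. int i}))"

end

theory Submission
  imports Defs
begin


lemma PiM_count_all_sets:
  assumes "finite K" "A \<subseteq> PiE K (\<lambda>_. UNIV::'b::countable set)"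
  shows "A \<in> sets (PiM K (\<lambda>_. count_space (UNIV::'b set)))"
proof (rule sets.countable)
  show "countable A"
    using countable_PiE[OF assms(1), of "\<lambda>_. UNIV::'b set"] assms(2) countable_subset by auto
  fix a assume "a \<in> A"
  then have a: "a \<in> PiE K (\<lambda>_. UNIV)" using assms by auto
  then have "{a} = PiE K (\<lambda>i. {a i})"
    by (auto simp: PiE_iff extensional_def fun_eq_iff; metis)
  also have "\<dots> \<in> sets (PiM K (\<lambda>_. count_space (UNIV::'b set)))"
    using assms(1) by (intro sets_PiM_I_finite) auto
  finally show "{a} \<in> sets (PiM K (\<lambda>_. count_space (UNIV::'b set)))" .
qed

lemma PiM_count_all_measurable:
  assumes "finite K"
  shows "h \<in> measurable (PiM K (\<lambda>_. count_space (UNIV::'b::countable set))) (count_space UNIV)"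
  unfolding measurable_def
  using assms by (auto intro!: PiM_count_all_sets simp: space_PiM)

definition deps :: "(nat \<Rightarrow> 'a \<Rightarrow> int) \<Rightarrow> nat set \<Rightarrow> ('a \<Rightarrow> 'c) \<Rightarrow> bool" where
  "deps X K f \<longleftrightarrow> (\<forall>\<omega> \<omega>'. (\<forall>i\<in>K. X i \<omega> = X i \<omega>') \<longrightarrow> f \<omega> = f \<omega>')"

definition fac :: "(nat \<Rightarrow> 'a \<Rightarrow> int) \<Rightarrow> nat set \<Rightarrow> ('a \<Rightarrow> 'c) \<Rightarrow> (nat \<Rightarrow> int) \<Rightarrow> 'c" where
  "fac X K f t = f (SOME \<omega>. (\<lambda>i\<in>K. X i \<omega>) = t)"

lemma fac_eq: "deps X K f \<Longrightarrow> fac X K f (\<lambda>i\<in>K. X i \<omega>) = f \<omega>"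
  unfolding fac_def deps_def
  by (rule someI2[of _ \<omega>]) (auto simp: fun_eq_iff restrict_def split: if_splits)

lemma deps_measurable:
  assumes "finite K" "\<And>i. i \<in> K \<Longrightarrow> X i \<in> measurable M (count_space UNIV)" "deps X K f"
  shows "f \<in> measurable M (count_space UNIV)"
proof -
  have "(\<lambda>\<omega>. fac X K f (\<lambda>i\<in>K. X i \<omega>)) \<in> measurable M (count_space UNIV)"
    by (rule measurable_compose[OF measurable_restrict PiM_count_all_measurable])
       (use assms in auto)
  then show ?thesis using fac_eq[OF assms(3)] by simp
qed

lemma deps_sets:
  assumes "finite K" "\<And>i. i \<in> K \<Longrightarrow> X i \<in> measurable M (count_space UNIV)" "deps X K P"
  shows "{\<omega>\<in>space M. P \<omega>} \<in> sets M"
proof -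
  have "P \<in> measurable M (count_space UNIV)" by (rule deps_measurable[OF assms])
  from measurable_sets[OF this, of "{True}"] show ?thesis
    by (simp add: vimage_def Int_def conj_commute)
qed




locale iidw = prob_space M for M :: "'a measure" +
  fixes X :: "nat \<Rightarrow> 'a \<Rightarrow> int"
  assumes ind: "indep_vars (\<lambda>_. count_space UNIV) X {1..}"
    and ident: "\<forall>j\<ge>1. distr M (count_space UNIV) (X j) = distr M (count_space UNIV) (X 1)"
begin

lemma Xmeas: "i \<ge> 1 \<Longrightarrow> X i \<in> measurable M (count_space UNIV)"
  using ind unfolding indep_vars_def by auto

lemma dsets: "finite K \<Longrightarrow> K \<subseteq> {1..} \<Longrightarrow> deps X K P \<Longrightarrow> {\<omega>\<in>space M. P \<omega>} \<in> events"
  by (rule deps_sets) (auto intro!: Xmeas)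

lemma dmeas: "finite K \<Longrightarrow> K \<subseteq> {1..} \<Longrightarrow> deps X K f \<Longrightarrow> f \<in> measurable M (count_space UNIV)"
  by (rule deps_measurable) (auto intro!: Xmeas)

lemma indep_deps:
  assumes K: "finite K" "K \<subseteq> {1..}" and L: "finite L" "L \<subseteq> {1..}" and KL: "K \<inter> L = {}"
    and P: "deps X K P" and Q: "deps X L Q"
  shows "prob {\<omega>\<in>space M. P \<omega> \<and> Q \<omega>} = prob {\<omega>\<in>space M. P \<omega>} * prob {\<omega>\<in>space M. Q \<omega>}"
proof -
  let ?TK = "\<lambda>\<omega>. \<lambda>i\<in>K. X i \<omega>" and ?TL = "\<lambda>\<omega>. \<lambda>i\<in>L. X i \<omega>"
  have iv: "indep_var (PiM K (\<lambda>_. count_space UNIV)) ?TK (PiM L (\<lambda>_. count_space UNIV)) ?TL"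
    by (rule indep_var_restrict[OF ind]) (use K L KL in auto)
  define A where "A = {t\<in>PiE K (\<lambda>_. UNIV). fac X K P t}"
  define B where "B = {t\<in>PiE L (\<lambda>_. UNIV). fac X L Q t}"
  have A: "A \<in> sets (PiM K (\<lambda>_. count_space UNIV))" unfolding A_def
    by (rule PiM_count_all_sets) (use K in auto)
  have B: "B \<in> sets (PiM L (\<lambda>_. count_space UNIV))" unfolding B_def
    by (rule PiM_count_all_sets) (use L in auto)
  have e1: "(\<lambda>x. (?TK x, ?TL x)) -` (A \<times> B) \<inter> space M = {\<omega>\<in>space M. P \<omega> \<and> Q \<omega>}"
    using fac_eq[OF P] fac_eq[OF Q] by (auto simp: A_def B_def)
  have e2: "?TK -` A \<inter> space M = {\<omega>\<in>space M. P \<omega>}"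
    using fac_eq[OF P] by (auto simp: A_def)
  have e3: "?TL -` B \<inter> space M = {\<omega>\<in>space M. Q \<omega>}"
    using fac_eq[OF Q] by (auto simp: B_def)
  show ?thesis using indep_varD[OF iv A B] e1 e2 e3 by simp
qed

abbreviation "D \<equiv> distr M (count_space UNIV) (X 1)"

lemma tuple_distr:
  assumes "n \<ge> 1"
  shows "distr M (PiM {1..n} (\<lambda>_. D)) (\<lambda>\<omega>. \<lambda>j\<in>{1..n}. X (j + a) \<omega>) = PiM {1..n} (\<lambda>_. D)"
proof -
  let ?K = "{a+1..a+n}" and ?I = "{1..n}"
  have iv: "indep_vars (\<lambda>_. count_space UNIV) X ?K"
    by (rule indep_vars_subset[OF ind]) auto
  have e0: "distr M (PiM ?K (\<lambda>_. count_space UNIV)) (\<lambda>\<omega>. \<lambda>i\<in>?K. X i \<omega>) =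
        PiM ?K (\<lambda>i. distr M (count_space UNIV) (X i))"
    by (rule indep_vars_iff_distr_eq_PiM'[THEN iffD1, OF _ _ iv]) (use assms in \<open>auto intro!: Xmeas\<close>)
  have e1: "PiM ?K (\<lambda>i. distr M (count_space UNIV) (X i)) = PiM ?K (\<lambda>_. D)"
  proof (rule PiM_cong[OF refl])
    fix i assume "i \<in> ?K" then have "i \<ge> 1" by simp
    then show "distr M (count_space UNIV) (X i) = D" using ident by blast
  qed
  have e2: "distr M (PiM ?K (\<lambda>_. D)) (\<lambda>\<omega>. \<lambda>i\<in>?K. X i \<omega>) = distr M (PiM ?K (\<lambda>_. count_space UNIV)) (\<lambda>\<omega>. \<lambda>i\<in>?K. X i \<omega>)"
    by (rule distr_cong[OF refl _ refl]) (rule sets_PiM_cong, auto)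
  have eK: "distr M (PiM ?K (\<lambda>_. D)) (\<lambda>\<omega>. \<lambda>i\<in>?K. X i \<omega>) = PiM ?K (\<lambda>_. D)"
    using e0 e1 e2 by simp
  have reind: "distr (PiM ?K (\<lambda>_. D)) (PiM ?I (\<lambda>_. D)) (\<lambda>\<omega>. \<lambda>n\<in>?I. \<omega> (n + a)) = PiM ?I (\<lambda>_. D)"
    by (rule distr_PiM_reindex) (auto simp: inj_on_def intro!: prob_space_distr Xmeas)
  have mK: "(\<lambda>\<omega>. \<lambda>i\<in>?K. X i \<omega>) \<in> measurable M (PiM ?K (\<lambda>_. D))"
    by (intro measurable_restrict) (auto intro!: Xmeas)
  have mI: "(\<lambda>\<omega>. \<lambda>n\<in>?I. \<omega> (n + a)) \<in> measurable (PiM ?K (\<lambda>_. D)) (PiM ?I (\<lambda>_. D))"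
    by (intro measurable_restrict measurable_component_singleton) auto
  have "distr M (PiM ?I (\<lambda>_. D)) (\<lambda>\<omega>. \<lambda>j\<in>?I. X (j + a) \<omega>) =
     distr M (PiM ?I (\<lambda>_. D)) ((\<lambda>\<omega>. \<lambda>n\<in>?I. \<omega> (n + a)) \<circ> (\<lambda>\<omega>. \<lambda>i\<in>?K. X i \<omega>))"
    by (intro distr_cong) (auto simp: fun_eq_iff)
  also have "\<dots> = PiM ?I (\<lambda>_. D)"
    by (subst distr_distr[symmetric, OF mI mK]) (simp only: eK reind)
  finally show ?thesis .
qed

lemma sum_shift_prob:
  "prob {\<omega>\<in>space M. (\<Sum>j\<in>{1..n}. X (j + a) \<omega>) \<in> R} = prob {\<omega>\<in>space M. (\<Sum>j\<in>{1..n}. X j \<omega>) \<in> R}"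
proof (cases "n \<ge> 1")
  case False then show ?thesis by simp
next
  case True
  let ?I = "{1..n}" and ?P = "PiM {1..n} (\<lambda>_. D)"
  have sP: "sets ?P = sets (PiM ?I (\<lambda>_. count_space UNIV))" by (intro sets_PiM_cong) auto
  define S where "S = {t\<in>space ?P. (\<Sum>j\<in>?I. t j) \<in> R}"
  have S: "S \<in> sets ?P" unfolding S_def sP space_PiM
    by (rule PiM_count_all_sets) auto
  have m: "(\<lambda>\<omega>. \<lambda>j\<in>?I. X (j + b) \<omega>) \<in> measurable M ?P" for b
    by (intro measurable_restrict) (auto intro!: Xmeas)
  have "prob {\<omega>\<in>space M. (\<Sum>j\<in>?I. X (j + b) \<omega>) \<in> R} = measure ?P S" for b
  proof -
    have "measure ?P S = measure (distr M ?P (\<lambda>\<omega>. \<lambda>j\<in>?I. X (j + b) \<omega>)) S"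
      using tuple_distr[OF True, of b] by simp
    also have "\<dots> = prob ((\<lambda>\<omega>. \<lambda>j\<in>?I. X (j + b) \<omega>) -` S \<inter> space M)"
      by (rule measure_distr[OF m S])
    also have "(\<lambda>\<omega>. \<lambda>j\<in>?I. X (j + b) \<omega>) -` S \<inter> space M = {\<omega>\<in>space M. (\<Sum>j\<in>?I. X (j + b) \<omega>) \<in> R}"
      using measurable_space[OF m[of b]] by (auto simp: S_def)
    finally show ?thesis by simp
  qed
  from this[of a] this[of 0] show ?thesis by simp
qed


lemma psum_diff: "a \<le> b \<Longrightarrow> psum X b \<omega> - psum X a \<omega> = (\<Sum>j\<in>{1..b-a}. X (j + a) \<omega>)"
proof -
  assume ab: "a \<le> b"
  have "{1..b} = {1..a} \<union> {a+1..b}" using ab by auto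
  then have "psum X b \<omega> = psum X a \<omega> + (\<Sum>j\<in>{a+1..b}. X j \<omega>)"
    unfolding psum_def by (subst sum.union_disjoint[symmetric]) auto
  moreover have "(\<Sum>j\<in>{a+1..b}. X j \<omega>) = (\<Sum>j\<in>{1..b-a}. X (j + a) \<omega>)"
    using ab by (intro sum.reindex_bij_witness[of _ "\<lambda>j. j + a" "\<lambda>j. j - a"]) auto
  ultimately show ?thesis by simp
qed

lemma shift_prob:
  "a \<le> b \<Longrightarrow> prob {\<omega>\<in>space M. psum X b \<omega> - psum X a \<omega> \<in> R} = prob {\<omega>\<in>space M. psum X (b - a) \<omega> \<in> R}"
proof -
  assume ab: "a \<le> b"
  have "{\<omega>\<in>space M. psum X b \<omega> - psum X a \<omega> \<in> R} = {\<omega>\<in>space M. (\<Sum>j\<in>{1..b-a}. X (j + a) \<omega>) \<in> R}"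
    using psum_diff[OF ab] by auto
  then show ?thesis using sum_shift_prob[where n="b-a" and a=a and R=R] by (simp add: psum_def)
qed

end



context
  fixes V :: "nat \<Rightarrow> int" and N :: nat
begin

definition "Gs = {k\<in>{1..N}. \<forall>j\<in>{1..<k}. V j \<noteq> V k}"
definition "Fs = {k\<in>{1..N}. \<forall>j\<in>{k<..N}. V j \<noteq> V k}"

lemma bijG: "bij_betw V Gs (V ` {1..N})"
proof -
  have "inj_on V Gs"
  proof (rule inj_onI)
    fix a b assume "a \<in> Gs" "b \<in> Gs" "V a = V b"
    then show "a = b" unfolding Gs_def
      by (cases a b rule: linorder_cases) force+
  qed
  moreover have "V ` Gs = V ` {1..N}"
  proof
    show "V ` Gs \<subseteq> V ` {1..N}" by (auto simp: Gs_def)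
    show "V ` {1..N} \<subseteq> V ` Gs"
    proof
      fix v assume "v \<in> V ` {1..N}"
      then have ne: "{k\<in>{1..N}. V k = v} \<noteq> {}" by auto
      define k where "k = Min {k\<in>{1..N}. V k = v}"
      have k: "k \<in> {k\<in>{1..N}. V k = v}" unfolding k_def using ne by (intro Min_in) auto
      have "k \<in> Gs" unfolding Gs_def
      proof (safe)
        show "k \<in> {1..N}" using k by auto
        fix j assume j: "j \<in> {1..<k}" "V j = V k"
        then have "j \<in> {k\<in>{1..N}. V k = v}" using k by auto
        then have "k \<le> j" unfolding k_def by (intro Min_le) auto
        then show False using j by auto
      qed
      then show "v \<in> V ` Gs" using k by force
    qed
  qed
  ultimately show ?thesis by (simp add: bij_betw_def)
qed

lemma bijF: "bij_betw V Fs (V ` {1..N})"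
proof -
  have "inj_on V Fs"
  proof (rule inj_onI)
    fix a b assume "a \<in> Fs" "b \<in> Fs" "V a = V b"
    then show "a = b" unfolding Fs_def
      by (cases a b rule: linorder_cases) force+
  qed
  moreover have "V ` Fs = V ` {1..N}"
  proof
    show "V ` Fs \<subseteq> V ` {1..N}" by (auto simp: Fs_def)
    show "V ` {1..N} \<subseteq> V ` Fs"
    proof
      fix v assume "v \<in> V ` {1..N}"
      then have ne: "{k\<in>{1..N}. V k = v} \<noteq> {}" by auto
      define k where "k = Max {k\<in>{1..N}. V k = v}"
      have k: "k \<in> {k\<in>{1..N}. V k = v}" unfolding k_def using ne by (intro Max_in) auto
      have "k \<in> Fs" unfolding Fs_def
      proof (safe)
        show "k \<in> {1..N}" using k by auto
        fix j assume j: "j \<in> {k<..N}" "V j = V k"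
        then have "j \<in> {k\<in>{1..N}. V k = v}" using k by auto
        then have "j \<le> k" unfolding k_def by (intro Max_ge) auto
        then show False using j by auto
      qed
      then show "v \<in> V ` Fs" using k by force
    qed
  qed
  ultimately show ?thesis by (simp add: bij_betw_def)
qed

lemma card_G: "card (V ` {1..N}) = card Gs"
  using bij_betw_same_card[OF bijG] by simp

lemma card_F: "card (V ` {1..N}) = card Fs"
  using bij_betw_same_card[OF bijF] by simp

lemma fibers: "card {1..N} = (\<Sum>v\<in>V ` {1..N}. card {m\<in>{1..N}. V m = v})"
proof -
  have "(\<Sum>v\<in>V ` {1..N}. (\<Sum>m\<in>{m\<in>{1..N}. V m = v}. 1::nat)) = (\<Sum>m\<in>{1..N}. 1)"
    by (rule sum.group) auto
  then show ?thesis by simp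
qed

lemma countG: "N = (\<Sum>k\<in>Gs. card {m\<in>{k..N}. V m = V k})"
proof -
  have "(\<Sum>k\<in>Gs. card {m\<in>{k..N}. V m = V k}) = (\<Sum>k\<in>Gs. card {m\<in>{1..N}. V m = V k})"
  proof (rule sum.cong[OF refl])
    fix k assume "k \<in> Gs"
    then have "{m\<in>{k..N}. V m = V k} = {m\<in>{1..N}. V m = V k}"
      unfolding Gs_def by (auto simp: not_le)
    then show "card {m\<in>{k..N}. V m = V k} = card {m\<in>{1..N}. V m = V k}" by simp
  qed
  also have "\<dots> = (\<Sum>v\<in>V ` {1..N}. card {m\<in>{1..N}. V m = v})"
    by (rule sum.reindex_bij_betw[OF bijG, where g="\<lambda>v. card {m\<in>{1..N}. V m = v}"])
  finally show ?thesis using fibers by simp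
qed

lemma countF: "N = (\<Sum>k\<in>Fs. card {m\<in>{1..k}. V m = V k})"
proof -
  have "(\<Sum>k\<in>Fs. card {m\<in>{1..k}. V m = V k}) = (\<Sum>k\<in>Fs. card {m\<in>{1..N}. V m = V k})"
  proof (rule sum.cong[OF refl])
    fix k assume "k \<in> Fs"
    then have "{m\<in>{1..k}. V m = V k} = {m\<in>{1..N}. V m = V k}"
      unfolding Fs_def by (auto simp: not_le)
    then show "card {m\<in>{1..k}. V m = V k} = card {m\<in>{1..N}. V m = V k}" by simp
  qed
  also have "\<dots> = (\<Sum>v\<in>V ` {1..N}. card {m\<in>{1..N}. V m = v})"
    by (rule sum.reindex_bij_betw[OF bijF, where g="\<lambda>v. card {m\<in>{1..N}. V m = v}"])
  finally show ?thesis using fibers by simp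
qed

lemma GF_le:
  fixes Q :: "nat \<Rightarrow> real"
  assumes mono: "\<And>a b. a \<le> b \<Longrightarrow> Q a \<le> Q b"
    and key: "\<And>b. b \<in> {1..N} \<Longrightarrow> Q (N - 1) \<le> Q (N - b) + Q (b - 1)"
  shows "real (card (V ` {1..N})) * Q (N - 1) \<le> (\<Sum>k\<in>Gs. Q (N - k)) + (\<Sum>k\<in>Fs. Q (k - 1))"
proof -
  let ?g = "the_inv_into Gs V" and ?f = "the_inv_into Fs V"
  have bg: "bij_betw ?g (V ` {1..N}) Gs" by (rule bij_betw_the_inv_into[OF bijG])
  have bf: "bij_betw ?f (V ` {1..N}) Fs" by (rule bij_betw_the_inv_into[OF bijF])
  have sG: "(\<Sum>k\<in>Gs. Q (N - k)) = (\<Sum>v\<in>V ` {1..N}. Q (N - ?g v))"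
    by (rule sum.reindex_bij_betw[OF bg, symmetric])
  have sF: "(\<Sum>k\<in>Fs. Q (k - 1)) = (\<Sum>v\<in>V ` {1..N}. Q (?f v - 1))"
    by (rule sum.reindex_bij_betw[OF bf, symmetric])
  have "(\<Sum>v\<in>V ` {1..N}. Q (N - 1)) \<le> (\<Sum>v\<in>V ` {1..N}. Q (N - ?g v) + Q (?f v - 1))"
  proof (rule sum_mono)
    fix v assume v: "v \<in> V ` {1..N}"
    have gG: "?g v \<in> Gs" using bg v by (auto simp: bij_betw_def)
    have fF: "?f v \<in> Fs" using bf v by (auto simp: bij_betw_def)
    have Vg: "V (?g v) = v" using bijG v by (simp add: bij_betw_def f_the_inv_into_f)
    have Vf: "V (?f v) = v" using bijF v by (simp add: bij_betw_def f_the_inv_into_f)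
    have le: "?g v \<le> ?f v"
    proof (rule ccontr)
      assume "\<not> ?g v \<le> ?f v"
      then show False using gG fF Vg Vf unfolding Gs_def Fs_def by auto
    qed
    have fN: "?f v \<in> {1..N}" using fF by (auto simp: Fs_def)
    have "Q (N - 1) \<le> Q (N - ?f v) + Q (?f v - 1)" by (rule key[OF fN])
    also have "\<dots> \<le> Q (N - ?g v) + Q (?f v - 1)" using mono[of "N - ?f v" "N - ?g v"] le by simp
    finally show "Q (N - 1) \<le> Q (N - ?g v) + Q (?f v - 1)" .
  qed
  then show ?thesis using sG sF by (simp add: sum.distrib)
qed

end



lemma resclass_iff: "N > 0 \<Longrightarrow> x \<in> resclass (int N) c \<longleftrightarrow> x mod int N = c mod int N"
proof
  assume "x \<in> resclass (int N) c"
  then obtain k where "x = c + k * int N" by (auto simp: resclass_def)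
  then show "x mod int N = c mod int N" by simp
next
  assume "N > 0" "x mod int N = c mod int N"
  then have "int N dvd x - c" by (simp add: mod_eq_dvd_iff)
  then obtain k where "x - c = int N * k" by (auto simp: dvd_def)
  then have "x = c + k * int N" by (simp add: algebra_simps)
  then show "x \<in> resclass (int N) c" by (auto simp: resclass_def)
qed

locale setting = iidw +
  fixes N :: nat and y :: "nat \<Rightarrow> int"
  assumes N2: "N \<ge> 2" and ylip: "\<forall>n\<in>{1..<N}. \<bar>y n - y (Suc n)\<bar> \<le> 1"
begin

definition V :: "nat \<Rightarrow> 'a \<Rightarrow> int" where "V n \<omega> = (y n - psum X n \<omega>) mod int N"
definition Hd :: "nat \<Rightarrow> nat \<Rightarrow> 'a \<Rightarrow> bool" where
  "Hd a b \<omega> \<longleftrightarrow> (psum X b \<omega> - psum X a \<omega>) mod int N = (y b - y a) mod int N"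
definition "Gev k = {\<omega>\<in>space M. \<forall>j\<in>{1..<k}. V j \<omega> \<noteq> V k \<omega>}"
definition "Fev k = {\<omega>\<in>space M. \<forall>j\<in>{k<..N}. V j \<omega> \<noteq> V k \<omega>}"

lemma VH: "V a \<omega> = V b \<omega> \<longleftrightarrow> Hd a b \<omega>"
  unfolding V_def Hd_def mod_eq_dvd_iff
  by (simp add: algebra_simps)

lemma deps_H: "a \<le> b \<Longrightarrow> deps X {a+1..b} (Hd a b)"
  unfolding deps_def Hd_def
proof (intro allI impI)
  fix \<omega> \<omega>' assume ab: "a \<le> b" and eq: "\<forall>i\<in>{a+1..b}. X i \<omega> = X i \<omega>'"
  have "psum X b \<omega> - psum X a \<omega> = psum X b \<omega>' - psum X a \<omega>'"
    unfolding psum_diff[OF ab] using eq ab by (intro sum.cong) auto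
  then show "((psum X b \<omega> - psum X a \<omega>) mod int N = (y b - y a) mod int N) =
         ((psum X b \<omega>' - psum X a \<omega>') mod int N = (y b - y a) mod int N)" by simp
qed

lemma deps_G: "deps X {1..k} (\<lambda>\<omega>. \<forall>j\<in>{1..<k}. V j \<omega> \<noteq> V k \<omega>)"
  unfolding deps_def
proof (intro allI impI)
  fix \<omega> \<omega>' assume eq: "\<forall>i\<in>{1..k}. X i \<omega> = X i \<omega>'"
  have "psum X j \<omega> = psum X j \<omega>'" if "j \<le> k" for j
    unfolding psum_def using eq that by (intro sum.cong) auto
  then have "V j \<omega> = V j \<omega>'" if "j \<le> k" for j using that by (simp add: V_def)
  then show "(\<forall>j\<in>{1..<k}. V j \<omega> \<noteq> V k \<omega>) = (\<forall>j\<in>{1..<k}. V j \<omega>' \<noteq> V k \<omega>')" by auto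
qed

lemma deps_F: "deps X {k+1..N} (\<lambda>\<omega>. \<forall>j\<in>{k<..N}. V j \<omega> \<noteq> V k \<omega>)"
  unfolding deps_def
proof (intro allI impI)
  fix \<omega> \<omega>' assume eq: "\<forall>i\<in>{k+1..N}. X i \<omega> = X i \<omega>'"
  have "Hd k j \<omega> = Hd k j \<omega>'" if "j \<in> {k<..N}" for j
    using deps_H[of k j] that eq unfolding deps_def by auto
  then show "(\<forall>j\<in>{k<..N}. V j \<omega> \<noteq> V k \<omega>) = (\<forall>j\<in>{k<..N}. V j \<omega>' \<noteq> V k \<omega>')"
    by (metis VH)
qed

lemma Gev_sets: "Gev k \<in> events"
  unfolding Gev_def by (rule dsets[OF _ _ deps_G]) auto

lemma Fev_sets: "Fev k \<in> events"
  unfolding Fev_def by (rule dsets[OF _ _ deps_F]) auto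

lemma H_sets: "a \<le> b \<Longrightarrow> {\<omega>\<in>space M. Hd a b \<omega>} \<in> events"
  by (rule dsets[OF _ _ deps_H]) auto

lemma indep_GH: "k \<le> m \<Longrightarrow> prob (Gev k \<inter> {\<omega>\<in>space M. Hd k m \<omega>}) = prob (Gev k) * prob {\<omega>\<in>space M. Hd k m \<omega>}"
proof -
  assume km: "k \<le> m"
  have "Gev k \<inter> {\<omega>\<in>space M. Hd k m \<omega>} = {\<omega>\<in>space M. (\<forall>j\<in>{1..<k}. V j \<omega> \<noteq> V k \<omega>) \<and> Hd k m \<omega>}"
    by (auto simp: Gev_def)
  then show ?thesis unfolding Gev_def
    by (simp only:) (rule indep_deps[OF _ _ _ _ _ deps_G deps_H[OF km]], auto)
qed

lemma indep_FH: "m \<le> k \<Longrightarrow> prob (Fev k \<inter> {\<omega>\<in>space M. Hd m k \<omega>}) = prob (Fev k) * prob {\<omega>\<in>space M. Hd m k \<omega>}"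
proof -
  assume km: "m \<le> k"
  have "Fev k \<inter> {\<omega>\<in>space M. Hd m k \<omega>} = {\<omega>\<in>space M. (\<forall>j\<in>{k<..N}. V j \<omega> \<noteq> V k \<omega>) \<and> Hd m k \<omega>}"
    by (auto simp: Fev_def)
  then show ?thesis unfolding Fev_def
    by (simp only:) (rule indep_deps[OF _ _ _ _ _ deps_F deps_H[OF km]], auto)
qed

lemma ylip_gen: "1 \<le> a \<Longrightarrow> a \<le> b \<Longrightarrow> b \<le> N \<Longrightarrow> \<bar>y b - y a\<bar> \<le> int (b - a)"
proof (induction b)
  case 0 then show ?case by simp
next
  case (Suc b)
  show ?case
  proof (cases "a = Suc b")
    case True then show ?thesis by simp
  next
    case False
    then have ab: "a \<le> b" using Suc by simp
    have "\<bar>y b - y (Suc b)\<bar> \<le> 1" using ylip Suc ab by auto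
    then show ?thesis using Suc.IH[OF Suc.prems(1) ab] Suc ab by auto
  qed
qed

abbreviation "val i c \<equiv> prob {\<omega>\<in>space M. psum X i \<omega> \<in> resclass (int N) c}"

lemma probH: "a \<le> b \<Longrightarrow> prob {\<omega>\<in>space M. Hd a b \<omega>} = val (b - a) (y b - y a)"
proof -
  assume ab: "a \<le> b"
  have "{\<omega>\<in>space M. Hd a b \<omega>} = {\<omega>\<in>space M. psum X b \<omega> - psum X a \<omega> \<in> resclass (int N) (y b - y a)}"
    using N2 by (auto simp: Hd_def resclass_iff)
  then show ?thesis using shift_prob[OF ab] by simp
qed

lemma pq_bounds:
  assumes "1 \<le> a" "a \<le> b" "b \<le> N"
  shows "qmin M X N (b - a) \<le> prob {\<omega>\<in>space M. Hd a b \<omega>}"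
    and "prob {\<omega>\<in>space M. Hd a b \<omega>} \<le> pmax M X N (b - a)"
proof -
  have yb: "y b - y a \<in> {- int (b - a) .. int (b - a)}" using ylip_gen[OF assms] by auto
  have "qmin M X N (b - a) \<le> prob {\<omega>\<in>space M. Hd a b \<omega>} \<and> prob {\<omega>\<in>space M. Hd a b \<omega>} \<le> pmax M X N (b - a)"
  proof (cases "b - a = 0")
    case True
    then have "a = b" using assms by simp
    then have "{\<omega>\<in>space M. Hd a b \<omega>} = space M" by (auto simp: Hd_def)
    then show ?thesis using True by (simp add: qmin_def pmax_def prob_space)
  next
    case False
    then show ?thesis unfolding probH[OF assms(2)] qmin_def pmax_def using yb
      by (auto intro!: Min_le Max_ge)
  qed
  then show "qmin M X N (b - a) \<le> prob {\<omega>\<in>space M. Hd a b \<omega>}"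
    and "prob {\<omega>\<in>space M. Hd a b \<omega>} \<le> pmax M X N (b - a)" by auto
qed

lemma q_nonneg: "qmin M X N i \<ge> 0"
  unfolding qmin_def by (auto intro!: Min.boundedI)

lemma p_nonneg: "pmax M X N i \<ge> 0"
  unfolding pmax_def by (auto intro!: Max.coboundedI[THEN order_trans[rotated]] simp: ) 


lemma deps_psum: "deps X {1..i} (\<lambda>\<omega>. psum X i \<omega> \<in> R)"
  unfolding deps_def psum_def by (auto intro!: sum.cong)

lemma val_sets: "{\<omega>\<in>space M. psum X i \<omega> \<in> R} \<in> events"
  by (rule dsets[OF _ _ deps_psum]) auto

lemma q_small:
  assumes i: "1 \<le> i" "N \<le> 2 * i + 1"
  shows "qmin M X N i \<le> 1 / real N"
proof -
  define Ys where "Ys = {- int i .. - int i + int N - 1}"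
  have Ysub: "Ys \<subseteq> {- int i .. int i}" using i by (auto simp: Ys_def)
  have cardY: "card Ys = N" unfolding Ys_def by simp
  have mle: "qmin M X N i \<le> val i c" if "c \<in> Ys" for c
    unfolding qmin_def using i that Ysub by (auto intro!: Min_le)
  have "real N * qmin M X N i = (\<Sum>c\<in>Ys. qmin M X N i)" using cardY by simp
  also have "\<dots> \<le> (\<Sum>c\<in>Ys. val i c)" by (rule sum_mono) (rule mle)
  also have "\<dots> = prob (\<Union>c\<in>Ys. {\<omega>\<in>space M. psum X i \<omega> \<in> resclass (int N) c})"
  proof (rule finite_measure_finite_Union[symmetric])
    show "finite Ys" by (simp add: Ys_def)
    show "(\<lambda>c. {\<omega>\<in>space M. psum X i \<omega> \<in> resclass (int N) c}) ` Ys \<subseteq> events"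
      using val_sets by auto
    show "disjoint_family_on (\<lambda>c. {\<omega>\<in>space M. psum X i \<omega> \<in> resclass (int N) c}) Ys"
    unfolding disjoint_family_on_def
    proof (intro ballI impI, rule ccontr)
      fix c c' assume c: "c \<in> Ys" "c' \<in> Ys" "c \<noteq> c'"
      assume ne: "{\<omega>\<in>space M. psum X i \<omega> \<in> resclass (int N) c} \<inter> {\<omega>\<in>space M. psum X i \<omega> \<in> resclass (int N) c'} \<noteq> {}"
      then obtain x where "x \<in> resclass (int N) c" "x \<in> resclass (int N) c'" by auto
      then have "c mod int N = c' mod int N" using N2 by (simp add: resclass_iff)
      then have "(c + int i) mod int N = (c' + int i) mod int N" by (metis mod_add_cong)
      moreover have "(c + int i) mod int N = c + int i" "(c' + int i) mod int N = c' + int i"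
        using c by (auto simp: Ys_def intro!: mod_pos_pos_trivial)
      ultimately show False using c by simp
    qed
  qed
  also have "\<dots> \<le> 1" by (rule prob_le_1)
  finally show ?thesis using N2 by (simp add: field_simps)
qed

definition Q :: "nat \<Rightarrow> real" where "Q t = (\<Sum>i<Suc t. qmin M X N i)"

lemma Q_ge1: "1 \<le> Q t"
proof -
  have "(\<Sum>i\<in>{0}. qmin M X N i) \<le> Q t" unfolding Q_def
    by (rule sum_mono2) (auto intro: q_nonneg)
  then show ?thesis by (simp add: qmin_def)
qed

lemma Q_mono: "a \<le> b \<Longrightarrow> Q a \<le> Q b"
  unfolding Q_def by (rule sum_mono2) (auto intro: q_nonneg)

lemma Q_tail:
  assumes "s < N" "N \<le> 2 * (s + 1) + 1"
  shows "Q (N - 1) \<le> Q s + 1"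
proof -
  have split: "{..<N} = {..<Suc s} \<union> {Suc s..<N}" using assms by auto
  have "Q (N - 1) = Q s + (\<Sum>i\<in>{Suc s..<N}. qmin M X N i)"
  proof -
    have "Suc (N - 1) = N" using assms by simp
    then show ?thesis unfolding Q_def by (simp only: split) (rule sum.union_disjoint, auto)
  qed
  also have "(\<Sum>i\<in>{Suc s..<N}. qmin M X N i) \<le> (\<Sum>i\<in>{Suc s..<N}. 1 / real N)"
    by (rule sum_mono, rule q_small) (use assms in auto)
  also have "\<dots> \<le> 1" using N2 by (simp add: field_simps)
  finally show ?thesis by simp
qed

lemma Q_key: "b \<in> {1..N} \<Longrightarrow> Q (N - 1) \<le> Q (N - b) + Q (b - 1)"
proof -
  assume b: "b \<in> {1..N}"
  show ?thesis
  proof (cases "N \<le> 2 * b")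
    case True
    then have "Q (N - 1) \<le> Q (b - 1) + 1" using b by (intro Q_tail) auto
    then show ?thesis using Q_ge1[of "N - b"] by simp
  next
    case False
    then have "Q (N - 1) \<le> Q (N - b) + 1" using b by (intro Q_tail) auto
    then show ?thesis using Q_ge1[of "b - 1"] by simp
  qed
qed

end



context setting
begin

abbreviation "Hs a b \<equiv> {\<omega>\<in>space M. Hd a b \<omega>}"

lemma int_sum_ind:
  assumes "finite K" "\<And>k. k \<in> K \<Longrightarrow> A k \<in> events"
  shows "integrable M (\<lambda>\<omega>. \<Sum>k\<in>K. c k * indicator (A k) \<omega> :: real)"
    and "(\<integral>\<omega>. (\<Sum>k\<in>K. c k * indicator (A k) \<omega>) \<partial>M) = (\<Sum>k\<in>K. c k * prob (A k))"
proof -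
  have int: "integrable M (\<lambda>\<omega>. c k * indicator (A k) \<omega> :: real)" if "k \<in> K" for k
    using assms(2)[OF that] emeasure_finite[of "A k"]
    by (intro integrable_mult_right integrable_real_indicator) (auto simp: less_top[symmetric])
  show "integrable M (\<lambda>\<omega>. \<Sum>k\<in>K. c k * indicator (A k) \<omega> :: real)"
    by (rule Bochner_Integration.integrable_sum) (rule int)
  have "(\<integral>\<omega>. (\<Sum>k\<in>K. c k * indicator (A k) \<omega>) \<partial>M) = (\<Sum>k\<in>K. \<integral>\<omega>. c k * indicator (A k) \<omega> \<partial>M)"
    by (rule Bochner_Integration.integral_sum) (rule int)
  also have "\<dots> = (\<Sum>k\<in>K. c k * prob (A k))"
    using assms(2) by (intro sum.cong refl) (simp add: Int_absorb2 sets.sets_into_space)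
  finally show "(\<integral>\<omega>. (\<Sum>k\<in>K. c k * indicator (A k) \<omega>) \<partial>M) = (\<Sum>k\<in>K. c k * prob (A k))" .
qed

lemma int_double:
  assumes "finite K" "\<And>k. k \<in> K \<Longrightarrow> finite (L k)" "\<And>k m. k \<in> K \<Longrightarrow> m \<in> L k \<Longrightarrow> A k m \<in> events"
  shows "(\<integral>\<omega>. (\<Sum>k\<in>K. \<Sum>m\<in>L k. indicator (A k m) \<omega> :: real) \<partial>M) = (\<Sum>k\<in>K. \<Sum>m\<in>L k. prob (A k m))"
proof -
  have "(\<integral>\<omega>. (\<Sum>k\<in>K. \<Sum>m\<in>L k. indicator (A k m) \<omega> :: real) \<partial>M) = (\<integral>\<omega>. (\<Sum>k\<in>K. \<Sum>m\<in>L k. 1 * indicator (A k m) \<omega>) \<partial>M)"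
    by simp
  also have "\<dots> = (\<Sum>k\<in>K. \<integral>\<omega>. (\<Sum>m\<in>L k. 1 * indicator (A k m) \<omega>) \<partial>M)"
    by (rule Bochner_Integration.integral_sum) (rule int_sum_ind(1), use assms in auto)
  also have "\<dots> = (\<Sum>k\<in>K. \<Sum>m\<in>L k. 1 * prob (A k m))"
    using int_sum_ind(2)[of "L _" "A _" "\<lambda>_. 1"] assms by (intro sum.cong refl) auto
  finally show ?thesis by simp
qed

lemma GsG: "\<omega> \<in> space M \<Longrightarrow> k \<in> Gs (\<lambda>n. V n \<omega>) N \<longleftrightarrow> k \<in> {1..N} \<and> \<omega> \<in> Gev k"
  by (auto simp: Gs_def Gev_def)

lemma FsF: "\<omega> \<in> space M \<Longrightarrow> k \<in> Fs (\<lambda>n. V n \<omega>) N \<longleftrightarrow> k \<in> {1..N} \<and> \<omega> \<in> Fev k"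
  by (auto simp: Fs_def Fev_def)

lemma card_ind: "\<omega> \<in> space M \<Longrightarrow> real (card ((\<lambda>n. V n \<omega>) ` {1..N})) = (\<Sum>k\<in>{1..N}. 1 * indicator (Gev k) \<omega>)"
proof -
  assume w: "\<omega> \<in> space M"
  have "Gs (\<lambda>n. V n \<omega>) N = {k\<in>{1..N}. \<omega> \<in> Gev k}" using GsG[OF w] by auto
  then have "real (card ((\<lambda>n. V n \<omega>) ` {1..N})) = real (card {k\<in>{1..N}. \<omega> \<in> Gev k})"
    using card_G[where V="\<lambda>n. V n \<omega>" and N=N] by simp
  also have "\<dots> = (\<Sum>k\<in>{k\<in>{1..N}. \<omega> \<in> Gev k}. 1)" by simp
  also have "\<dots> = (\<Sum>k\<in>{1..N}. 1 * indicator (Gev k) \<omega>)"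
    by (simp add: indicator_def sum.If_cases, intro arg_cong[where f=card], auto)
  finally show ?thesis .
qed

lemma EC: "(\<integral>\<omega>. real (card ((\<lambda>n. V n \<omega>) ` {1..N})) \<partial>M) = (\<Sum>k\<in>{1..N}. prob (Gev k))"
proof -
  have "(\<integral>\<omega>. real (card ((\<lambda>n. V n \<omega>) ` {1..N})) \<partial>M) = (\<integral>\<omega>. (\<Sum>k\<in>{1..N}. 1 * indicator (Gev k) \<omega>) \<partial>M)"
    by (rule Bochner_Integration.integral_cong[OF refl]) (rule card_ind)
  also have "\<dots> = (\<Sum>k\<in>{1..N}. 1 * prob (Gev k))"
    by (rule int_sum_ind(2)) (auto intro: Gev_sets)
  finally show ?thesis by simp
qed

lemma countG_ind: "\<omega> \<in> space M \<Longrightarrow> real N = (\<Sum>k\<in>{1..N}. \<Sum>m\<in>{k..N}. indicator (Gev k \<inter> Hs k m) \<omega>)"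
proof -
  assume w: "\<omega> \<in> space M"
  let ?V = "\<lambda>n. V n \<omega>"
  have "real N = real (\<Sum>k\<in>Gs ?V N. card {m\<in>{k..N}. ?V m = ?V k})"
    using countG[where V="?V" and N=N] by simp
  also have "\<dots> = (\<Sum>k\<in>Gs ?V N. real (card {m\<in>{k..N}. ?V m = ?V k}))" by simp
  also have "\<dots> = (\<Sum>k\<in>{k\<in>{1..N}. \<omega> \<in> Gev k}. real (card {m\<in>{k..N}. ?V m = ?V k}))"
    using GsG[OF w] by (intro sum.cong) auto
  also have "\<dots> = (\<Sum>k\<in>{1..N}. if \<omega> \<in> Gev k then real (card {m\<in>{k..N}. ?V m = ?V k}) else 0)"
    by (rule sum.inter_filter) auto
  also have "\<dots> = (\<Sum>k\<in>{1..N}. \<Sum>m\<in>{k..N}. indicator (Gev k \<inter> Hs k m) \<omega>)"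
  proof (rule sum.cong[OF refl])
    fix k assume k: "k \<in> {1..N}"
    have e: "\<And>m. (?V m = ?V k) = Hd k m \<omega>" using VH by metis
    have "real (card {m\<in>{k..N}. ?V m = ?V k}) = (\<Sum>m\<in>{k..N}. if Hd k m \<omega> then 1 else 0)"
      by (simp only: e) (simp add: sum.If_cases, intro arg_cong[where f=card], auto)
    then have hc: "real (card {m\<in>{k..N}. ?V m = ?V k}) = (\<Sum>m\<in>{k..N}. if Hd k m \<omega> then 1 else 0)" .
    show "(if \<omega> \<in> Gev k then real (card {m\<in>{k..N}. ?V m = ?V k}) else 0) =
      (\<Sum>m\<in>{k..N}. indicator (Gev k \<inter> Hs k m) \<omega>)"
    proof (cases "\<omega> \<in> Gev k")
      case True
      have "(\<Sum>m\<in>{k..N}. indicator (Gev k \<inter> Hs k m) \<omega>) = (\<Sum>m\<in>{k..N}. if Hd k m \<omega> then 1 else 0 :: real)"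
        using True w by (intro sum.cong) (auto simp: indicator_def)
      then show ?thesis using True hc by simp
    next
      case False then show ?thesis by (simp add: indicator_def)
    qed
  qed
  finally show ?thesis .
qed

lemma countF_ind: "\<omega> \<in> space M \<Longrightarrow> real N = (\<Sum>k\<in>{1..N}. \<Sum>m\<in>{1..k}. indicator (Fev k \<inter> Hs m k) \<omega>)"
proof -
  assume w: "\<omega> \<in> space M"
  let ?V = "\<lambda>n. V n \<omega>"
  have "real N = real (\<Sum>k\<in>Fs ?V N. card {m\<in>{1..k}. ?V m = ?V k})"
    using countF[where V="?V" and N=N] by simp
  also have "\<dots> = (\<Sum>k\<in>Fs ?V N. real (card {m\<in>{1..k}. ?V m = ?V k}))" by simp
  also have "\<dots> = (\<Sum>k\<in>{k\<in>{1..N}. \<omega> \<in> Fev k}. real (card {m\<in>{1..k}. ?V m = ?V k}))"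
    using FsF[OF w] by (intro sum.cong) auto
  also have "\<dots> = (\<Sum>k\<in>{1..N}. if \<omega> \<in> Fev k then real (card {m\<in>{1..k}. ?V m = ?V k}) else 0)"
    by (rule sum.inter_filter) auto
  also have "\<dots> = (\<Sum>k\<in>{1..N}. \<Sum>m\<in>{1..k}. indicator (Fev k \<inter> Hs m k) \<omega>)"
  proof (rule sum.cong[OF refl])
    fix k assume k: "k \<in> {1..N}"
    have e: "\<And>m. (?V m = ?V k) = Hd m k \<omega>" using VH by metis
    have "real (card {m\<in>{1..k}. ?V m = ?V k}) = (\<Sum>m\<in>{1..k}. if Hd m k \<omega> then 1 else 0)"
      by (simp only: e) (simp add: sum.If_cases, intro arg_cong[where f=card], auto)
    then have hc: "real (card {m\<in>{1..k}. ?V m = ?V k}) = (\<Sum>m\<in>{1..k}. if Hd m k \<omega> then 1 else 0)" .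
    show "(if \<omega> \<in> Fev k then real (card {m\<in>{1..k}. ?V m = ?V k}) else 0) =
      (\<Sum>m\<in>{1..k}. indicator (Fev k \<inter> Hs m k) \<omega>)"
    proof (cases "\<omega> \<in> Fev k")
      case True
      have "(\<Sum>m\<in>{1..k}. indicator (Fev k \<inter> Hs m k) \<omega>) = (\<Sum>m\<in>{1..k}. if Hd m k \<omega> then 1 else 0 :: real)"
        using True w by (intro sum.cong) (auto simp: indicator_def)
      then show ?thesis using True hc by simp
    next
      case False then show ?thesis by (simp add: indicator_def)
    qed
  qed
  finally show ?thesis .
qed

lemma N_G: "real N = (\<Sum>k\<in>{1..N}. \<Sum>m\<in>{k..N}. prob (Gev k) * prob (Hs k m))"
proof -
  have "real N = (\<integral>\<omega>. real N \<partial>M)" by (simp add: prob_space)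
  also have "\<dots> = (\<integral>\<omega>. (\<Sum>k\<in>{1..N}. \<Sum>m\<in>{k..N}. indicator (Gev k \<inter> Hs k m) \<omega>) \<partial>M)"
    by (rule Bochner_Integration.integral_cong[OF refl]) (rule countG_ind)
  also have "\<dots> = (\<Sum>k\<in>{1..N}. \<Sum>m\<in>{k..N}. prob (Gev k \<inter> Hs k m))"
    by (rule int_double) (auto intro!: sets.Int Gev_sets H_sets)
  also have "\<dots> = (\<Sum>k\<in>{1..N}. \<Sum>m\<in>{k..N}. prob (Gev k) * prob (Hs k m))"
    by (intro sum.cong refl indep_GH) auto
  finally show ?thesis .
qed

lemma N_F: "real N = (\<Sum>k\<in>{1..N}. \<Sum>m\<in>{1..k}. prob (Fev k) * prob (Hs m k))"
proof -
  have "real N = (\<integral>\<omega>. real N \<partial>M)" by (simp add: prob_space)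
  also have "\<dots> = (\<integral>\<omega>. (\<Sum>k\<in>{1..N}. \<Sum>m\<in>{1..k}. indicator (Fev k \<inter> Hs m k) \<omega>) \<partial>M)"
    by (rule Bochner_Integration.integral_cong[OF refl]) (rule countF_ind)
  also have "\<dots> = (\<Sum>k\<in>{1..N}. \<Sum>m\<in>{1..k}. prob (Fev k \<inter> Hs m k))"
    by (rule int_double) (auto intro!: sets.Int Fev_sets H_sets)
  also have "\<dots> = (\<Sum>k\<in>{1..N}. \<Sum>m\<in>{1..k}. prob (Fev k) * prob (Hs m k))"
    by (intro sum.cong refl indep_FH) auto
  finally show ?thesis .
qed

end



context setting
begin

lemma sum_pmax_shift: "k \<in> {1..N} \<Longrightarrow> (\<Sum>m\<in>{k..N}. pmax M X N (m - k)) \<le> (\<Sum>i<N. pmax M X N i)"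
proof -
  assume k: "k \<in> {1..N}"
  have "(\<Sum>m\<in>{k..N}. pmax M X N (m - k)) = (\<Sum>i\<in>(\<lambda>m. m - k) ` {k..N}. pmax M X N i)"
    by (rule sum.reindex[symmetric, unfolded comp_def]) (auto simp: inj_on_def)
  also have "\<dots> \<le> (\<Sum>i<N. pmax M X N i)"
    using k by (intro sum_mono2) (auto intro: p_nonneg)
  finally show ?thesis .
qed

lemma sum_qmin_G: "k \<in> {1..N} \<Longrightarrow> (\<Sum>m\<in>{k..N}. qmin M X N (m - k)) = Q (N - k)"
proof -
  assume k: "k \<in> {1..N}"
  have "(\<Sum>m\<in>{k..N}. qmin M X N (m - k)) = (\<Sum>i\<in>(\<lambda>m. m - k) ` {k..N}. qmin M X N i)"
    by (rule sum.reindex[symmetric, unfolded comp_def]) (auto simp: inj_on_def)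
  also have "(\<lambda>m. m - k) ` {k..N} = {..<Suc (N - k)}"
  proof
    show "{..<Suc (N - k)} \<subseteq> (\<lambda>m. m - k) ` {k..N}"
    proof
      fix i assume "i \<in> {..<Suc (N - k)}"
      then show "i \<in> (\<lambda>m. m - k) ` {k..N}" using k by (intro image_eqI[of _ _ "i + k"]) auto
    qed
  qed auto
  finally show ?thesis by (simp add: Q_def)
qed

lemma sum_qmin_F: "k \<in> {1..N} \<Longrightarrow> (\<Sum>m\<in>{1..k}. qmin M X N (k - m)) = Q (k - 1)"
proof -
  assume k: "k \<in> {1..N}"
  have "(\<Sum>m\<in>{1..k}. qmin M X N (k - m)) = (\<Sum>i\<in>(\<lambda>m. k - m) ` {1..k}. qmin M X N i)"
    by (rule sum.reindex[symmetric, unfolded comp_def]) (auto simp: inj_on_def)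
  also have "(\<lambda>m. k - m) ` {1..k} = {..<Suc (k - 1)}"
  proof
    show "{..<Suc (k - 1)} \<subseteq> (\<lambda>m. k - m) ` {1..k}"
    proof
      fix i assume "i \<in> {..<Suc (k - 1)}"
      then show "i \<in> (\<lambda>m. k - m) ` {1..k}" using k by (intro image_eqI[of _ _ "k - i"]) auto
    qed
  qed auto
  finally show ?thesis by (simp add: Q_def)
qed

lemma lower: "real N \<le> (\<Sum>k\<in>{1..N}. prob (Gev k)) * (\<Sum>i<N. pmax M X N i)"
proof -
  have "real N = (\<Sum>k\<in>{1..N}. \<Sum>m\<in>{k..N}. prob (Gev k) * prob (Hs k m))" by (rule N_G)
  also have "\<dots> \<le> (\<Sum>k\<in>{1..N}. \<Sum>m\<in>{k..N}. prob (Gev k) * pmax M X N (m - k))"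
    by (intro sum_mono mult_left_mono pq_bounds(2)) auto
  also have "\<dots> = (\<Sum>k\<in>{1..N}. prob (Gev k) * (\<Sum>m\<in>{k..N}. pmax M X N (m - k)))"
    by (simp add: sum_distrib_left)
  also have "\<dots> \<le> (\<Sum>k\<in>{1..N}. prob (Gev k) * (\<Sum>i<N. pmax M X N i))"
    by (intro sum_mono mult_left_mono sum_pmax_shift) auto
  also have "\<dots> = (\<Sum>k\<in>{1..N}. prob (Gev k)) * (\<Sum>i<N. pmax M X N i)"
    by (simp add: sum_distrib_right)
  finally show ?thesis .
qed

lemma upG: "(\<Sum>k\<in>{1..N}. prob (Gev k) * Q (N - k)) \<le> real N"
proof -
  have "(\<Sum>k\<in>{1..N}. prob (Gev k) * Q (N - k)) = (\<Sum>k\<in>{1..N}. \<Sum>m\<in>{k..N}. prob (Gev k) * qmin M X N (m - k))"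
    by (intro sum.cong refl) (simp add: sum_distrib_left[symmetric] sum_qmin_G)
  also have "\<dots> \<le> (\<Sum>k\<in>{1..N}. \<Sum>m\<in>{k..N}. prob (Gev k) * prob (Hs k m))"
    by (intro sum_mono mult_left_mono pq_bounds(1)) auto
  also have "\<dots> = real N" by (rule N_G[symmetric])
  finally show ?thesis .
qed

lemma upF: "(\<Sum>k\<in>{1..N}. prob (Fev k) * Q (k - 1)) \<le> real N"
proof -
  have "(\<Sum>k\<in>{1..N}. prob (Fev k) * Q (k - 1)) = (\<Sum>k\<in>{1..N}. \<Sum>m\<in>{1..k}. prob (Fev k) * qmin M X N (k - m))"
  proof (intro sum.cong refl)
    fix k assume k: "k \<in> {1..N}"
    show "prob (Fev k) * Q (k - 1) = (\<Sum>m\<in>{1..k}. prob (Fev k) * qmin M X N (k - m))"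
      by (simp only: sum_distrib_left[symmetric] sum_qmin_F[OF k])
  qed
  also have "\<dots> \<le> (\<Sum>k\<in>{1..N}. \<Sum>m\<in>{1..k}. prob (Fev k) * prob (Hs m k))"
    by (intro sum_mono mult_left_mono pq_bounds(1)) auto
  also have "\<dots> = real N" by (rule N_F[symmetric])
  finally show ?thesis .
qed

lemma sum_Gs: "\<omega> \<in> space M \<Longrightarrow> (\<Sum>k\<in>Gs (\<lambda>n. V n \<omega>) N. (f::nat\<Rightarrow>real) k) = (\<Sum>k\<in>{1..N}. f k * indicator (Gev k) \<omega>)"
proof -
  assume w: "\<omega> \<in> space M"
  have "(\<Sum>k\<in>{1..N}. f k * indicator (Gev k) \<omega>) = (\<Sum>k\<in>{1..N}. if \<omega> \<in> Gev k then f k else 0)"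
    by (rule sum.cong[OF refl]) (simp add: indicator_def)
  also have "\<dots> = (\<Sum>k\<in>{k\<in>{1..N}. \<omega> \<in> Gev k}. f k)" by (rule sum.inter_filter[symmetric]) simp
  also have "{k\<in>{1..N}. \<omega> \<in> Gev k} = Gs (\<lambda>n. V n \<omega>) N" using GsG[OF w] by blast
  finally show ?thesis by simp
qed

lemma sum_Fs: "\<omega> \<in> space M \<Longrightarrow> (\<Sum>k\<in>Fs (\<lambda>n. V n \<omega>) N. (f::nat\<Rightarrow>real) k) = (\<Sum>k\<in>{1..N}. f k * indicator (Fev k) \<omega>)"
proof -
  assume w: "\<omega> \<in> space M"
  have "(\<Sum>k\<in>{1..N}. f k * indicator (Fev k) \<omega>) = (\<Sum>k\<in>{1..N}. if \<omega> \<in> Fev k then f k else 0)"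
    by (rule sum.cong[OF refl]) (simp add: indicator_def)
  also have "\<dots> = (\<Sum>k\<in>{k\<in>{1..N}. \<omega> \<in> Fev k}. f k)" by (rule sum.inter_filter[symmetric]) simp
  also have "{k\<in>{1..N}. \<omega> \<in> Fev k} = Fs (\<lambda>n. V n \<omega>) N" using FsF[OF w] by blast
  finally show ?thesis by simp
qed

lemma EQ: "(\<Sum>k\<in>{1..N}. prob (Gev k)) * Q (N - 1) \<le>
   (\<Sum>k\<in>{1..N}. prob (Gev k) * Q (N - k)) + (\<Sum>k\<in>{1..N}. prob (Fev k) * Q (k - 1))"
proof -
  let ?L = "\<lambda>\<omega>. \<Sum>k\<in>{1..N}. Q (N - 1) * indicator (Gev k) \<omega>"
  let ?R1 = "\<lambda>\<omega>. \<Sum>k\<in>{1..N}. Q (N - k) * indicator (Gev k) \<omega>"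
  let ?R2 = "\<lambda>\<omega>. \<Sum>k\<in>{1..N}. Q (k - 1) * indicator (Fev k) \<omega>"
  have iL: "integrable M ?L" by (rule int_sum_ind(1)) (auto intro: Gev_sets)
  have i1: "integrable M ?R1" by (rule int_sum_ind(1)) (auto intro: Gev_sets)
  have i2: "integrable M ?R2" by (rule int_sum_ind(1)) (auto intro: Fev_sets)
  have "(\<integral>\<omega>. ?L \<omega> \<partial>M) \<le> (\<integral>\<omega>. ?R1 \<omega> + ?R2 \<omega> \<partial>M)"
  proof (rule integral_mono)
    show "integrable M ?L" by (rule iL)
    show "integrable M (\<lambda>\<omega>. ?R1 \<omega> + ?R2 \<omega>)" using i1 i2 by (rule Bochner_Integration.integrable_add)
    fix \<omega> assume w: "\<omega> \<in> space M"
    have "?L \<omega> = Q (N - 1) * (\<Sum>k\<in>{1..N}. 1 * indicator (Gev k) \<omega>)"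
      by (simp add: sum_distrib_left)
    also have "\<dots> = real (card ((\<lambda>n. V n \<omega>) ` {1..N})) * Q (N - 1)"
      by (simp only: card_ind[OF w] mult.commute)
    also have "\<dots> \<le> (\<Sum>k\<in>Gs (\<lambda>n. V n \<omega>) N. Q (N - k)) + (\<Sum>k\<in>Fs (\<lambda>n. V n \<omega>) N. Q (k - 1))"
      by (rule GF_le) (rule Q_mono, assumption, rule Q_key, assumption)
    also have "\<dots> = ?R1 \<omega> + ?R2 \<omega>" using sum_Gs[OF w] sum_Fs[OF w] by simp
    finally show "?L \<omega> \<le> ?R1 \<omega> + ?R2 \<omega>" .
  qed
  also have "(\<integral>\<omega>. ?R1 \<omega> + ?R2 \<omega> \<partial>M) = (\<integral>\<omega>. ?R1 \<omega> \<partial>M) + (\<integral>\<omega>. ?R2 \<omega> \<partial>M)"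
    using i1 i2 by (rule Bochner_Integration.integral_add)
  finally have ineq: "(\<integral>\<omega>. ?L \<omega> \<partial>M) \<le> (\<integral>\<omega>. ?R1 \<omega> \<partial>M) + (\<integral>\<omega>. ?R2 \<omega> \<partial>M)" .
  have eL: "(\<integral>\<omega>. ?L \<omega> \<partial>M) = (\<Sum>k\<in>{1..N}. Q (N - 1) * prob (Gev k))"
    by (rule int_sum_ind(2)) (auto intro: Gev_sets)
  have e1: "(\<integral>\<omega>. ?R1 \<omega> \<partial>M) = (\<Sum>k\<in>{1..N}. Q (N - k) * prob (Gev k))"
    by (rule int_sum_ind(2)) (auto intro: Gev_sets)
  have e2: "(\<integral>\<omega>. ?R2 \<omega> \<partial>M) = (\<Sum>k\<in>{1..N}. Q (k - 1) * prob (Fev k))"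
    by (rule int_sum_ind(2)) (auto intro: Fev_sets)
  from ineq have "(\<Sum>k\<in>{1..N}. Q (N - 1) * prob (Gev k)) \<le>
      (\<Sum>k\<in>{1..N}. Q (N - k) * prob (Gev k)) + (\<Sum>k\<in>{1..N}. Q (k - 1) * prob (Fev k))"
    by (simp only: eL e1 e2)
  then show ?thesis by (simp add: sum_distrib_right sum_distrib_left mult.commute)
qed

lemma upper: "(\<Sum>k\<in>{1..N}. prob (Gev k)) * (\<Sum>i<N. qmin M X N i) \<le> 2 * real N"
proof -
  have "Suc (N - 1) = N" using N2 by simp
  then have "(\<Sum>i<N. qmin M X N i) = Q (N - 1)" by (simp add: Q_def)
  then show ?thesis using EQ upG upF by simp
qed

end



context setting
begin

lemma section_eq:
  assumes "\<omega> \<in> space M"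
  shows "{0..<int N} \<inter> {z. \<exists>n\<in>{1..N}. (z + psum X n \<omega>) mod int N = y n mod int N} = (\<lambda>n. V n \<omega>) ` {1..N}"
proof
  have Npos: "int N > 0" using N2 by simp
  show "{0..<int N} \<inter> {z. \<exists>n\<in>{1..N}. (z + psum X n \<omega>) mod int N = y n mod int N} \<subseteq> (\<lambda>n. V n \<omega>) ` {1..N}"
  proof
    fix z assume "z \<in> {0..<int N} \<inter> {z. \<exists>n\<in>{1..N}. (z + psum X n \<omega>) mod int N = y n mod int N}"
    then obtain n where z: "0 \<le> z" "z < int N" and n: "n \<in> {1..N}" "(z + psum X n \<omega>) mod int N = y n mod int N" by auto
    have "z = z mod int N" using z by simp
    also have "\<dots> = (z + psum X n \<omega> - psum X n \<omega>) mod int N" by simp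
    also have "\<dots> = (y n - psum X n \<omega>) mod int N" using n(2) by (metis mod_diff_cong)
    finally show "z \<in> (\<lambda>n. V n \<omega>) ` {1..N}" using n(1) by (auto simp: V_def)
  qed
  show "(\<lambda>n. V n \<omega>) ` {1..N} \<subseteq> {0..<int N} \<inter> {z. \<exists>n\<in>{1..N}. (z + psum X n \<omega>) mod int N = y n mod int N}"
  proof
    fix z assume "z \<in> (\<lambda>n. V n \<omega>) ` {1..N}"
    then obtain n where n: "n \<in> {1..N}" and z: "z = (y n - psum X n \<omega>) mod int N" by (auto simp: V_def)
    have "(z + psum X n \<omega>) mod int N = (y n - psum X n \<omega> + psum X n \<omega>) mod int N"
      unfolding z by (rule mod_add_left_eq)
    then have "(z + psum X n \<omega>) mod int N = y n mod int N" by simp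
    moreover have "0 \<le> z" "z < int N" using Npos z by auto
    ultimately show "z \<in> {0..<int N} \<inter> {z. \<exists>n\<in>{1..N}. (z + psum X n \<omega>) mod int N = y n mod int N}"
      using n by auto
  qed
qed

lemma PA:
  fixes MN :: "'b measure" and X0 :: "'b \<Rightarrow> int"
  assumes MN: "prob_space MN" and X0: "X0 \<in> measurable MN (count_space UNIV)"
    and dX0: "distr MN (count_space UNIV) X0 = measure_pmf (pmf_of_set {0..<int N})"
  shows "measure (MN \<Otimes>\<^sub>M M)
               {(x, \<omega>) \<in> space (MN \<Otimes>\<^sub>M M).
                  \<exists>n\<in>{1..N}. (X0 x + psum X n \<omega>) mod int N = y n mod int N}
       = (\<Sum>k\<in>{1..N}. prob (Gev k)) / real N"
proof -
  interpret MN: prob_space MN by (rule MN)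
  interpret P: pair_prob_space MN M by unfold_locales
  define \<Psi> where "\<Psi> z \<omega> \<longleftrightarrow> (\<exists>n\<in>{1..N}. (z + psum X n \<omega>) mod int N = y n mod int N)" for z \<omega>
  define B where "B = {(x, \<omega>) \<in> space (MN \<Otimes>\<^sub>M M). \<exists>n\<in>{1..N}. (X0 x + psum X n \<omega>) mod int N = y n mod int N}"
  have B': "B = (\<lambda>p. \<Psi> (X0 (fst p)) (snd p)) -` {True} \<inter> space (MN \<Otimes>\<^sub>M M)"
    unfolding B_def \<Psi>_def by (rule set_eqI) (simp add: split_beta conj_commute)
  have dPsi: "deps X {1..N} (\<Psi> z)" for z
    unfolding deps_def \<Psi>_def psum_def
  proof (intro allI impI)
    fix \<omega> \<omega>' assume eq: "\<forall>i\<in>{1..N}. X i \<omega> = X i \<omega>'"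
    have "(\<Sum>j = 1..n. X j \<omega>) = (\<Sum>j = 1..n. X j \<omega>')" if "n \<in> {1..N}" for n
      using eq that by (intro sum.cong) auto
    then show "(\<exists>n\<in>{1..N}. (z + (\<Sum>j = 1..n. X j \<omega>)) mod int N = y n mod int N) =
        (\<exists>n\<in>{1..N}. (z + (\<Sum>j = 1..n. X j \<omega>')) mod int N = y n mod int N)" by auto
  qed
  have mPsi: "(\<lambda>p. \<Psi> (X0 (fst p)) (snd p)) \<in> measurable (MN \<Otimes>\<^sub>M M) (count_space UNIV)"
  proof (rule measurable_compose_countable[where f="\<lambda>z p. \<Psi> z (snd p)" and g="\<lambda>p. X0 (fst p)"])
    fix z :: int
    show "(\<lambda>p. \<Psi> z (snd p)) \<in> measurable (MN \<Otimes>\<^sub>M M) (count_space UNIV)"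
      by (rule measurable_compose[OF measurable_snd dmeas[OF _ _ dPsi]]) auto
    show "(\<lambda>p. X0 (fst p)) \<in> measurable (MN \<Otimes>\<^sub>M M) (count_space UNIV)"
      by (rule measurable_compose[OF measurable_fst X0])
  qed
  have Bs: "B \<in> sets (MN \<Otimes>\<^sub>M M)" unfolding B' by (rule measurable_sets[OF mPsi]) simp
  define g where "g \<omega> = (\<Sum>k\<in>{1..N}. (1 / real N) * indicator (Gev k) \<omega>)" for \<omega>
  have ig: "integrable M g" unfolding g_def by (rule int_sum_ind(1)) (auto intro: Gev_sets)
  have Ig: "integral\<^sup>L M g = (\<Sum>k\<in>{1..N}. (1 / real N) * prob (Gev k))"
    unfolding g_def by (rule int_sum_ind(2)) (auto intro: Gev_sets)
  have sec: "emeasure MN ((\<lambda>x. (x, \<omega>)) -` B) = ennreal (g \<omega>)" if w: "\<omega> \<in> space M" for \<omega>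
  proof -
    have "(\<lambda>x. (x, \<omega>)) -` B = X0 -` {z. \<Psi> z \<omega>} \<inter> space MN"
      using w by (auto simp: B_def \<Psi>_def space_pair_measure)
    then have "emeasure MN ((\<lambda>x. (x, \<omega>)) -` B) = ennreal (measure MN (X0 -` {z. \<Psi> z \<omega>} \<inter> space MN))"
      by (simp add: MN.emeasure_eq_measure)
    also have "measure MN (X0 -` {z. \<Psi> z \<omega>} \<inter> space MN) = measure (distr MN (count_space UNIV) X0) {z. \<Psi> z \<omega>}"
      by (rule measure_distr[symmetric, OF X0]) simp
    also have "\<dots> = real (card ({0..<int N} \<inter> {z. \<Psi> z \<omega>})) / real (card {0..<int N})"
      unfolding dX0 using N2 by (subst measure_pmf_of_set) auto
    also have "\<dots> = real (card ((\<lambda>n. V n \<omega>) ` {1..N})) / real N"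
      using section_eq[OF w] by (simp add: \<Psi>_def)
    also have "\<dots> = g \<omega>" unfolding g_def using card_ind[OF w]
      by (simp add: sum_divide_distrib)
    finally show ?thesis .
  qed
  have "emeasure (MN \<Otimes>\<^sub>M M) B = (\<integral>\<^sup>+\<omega>. emeasure MN ((\<lambda>x. (x, \<omega>)) -` B) \<partial>M)"
    by (rule P.emeasure_pair_measure_alt2[OF Bs])
  also have "\<dots> = (\<integral>\<^sup>+\<omega>. ennreal (g \<omega>) \<partial>M)"
    by (rule nn_integral_cong) (rule sec)
  also have "\<dots> = ennreal (integral\<^sup>L M g)"
    by (rule nn_integral_eq_integral[OF ig]) (auto simp: g_def intro!: sum_nonneg)
  finally have em: "emeasure (MN \<Otimes>\<^sub>M M) B = ennreal (integral\<^sup>L M g)" .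
  have gnn: "0 \<le> integral\<^sup>L M g"
    by (rule Bochner_Integration.integral_nonneg) (auto simp: g_def intro!: sum_nonneg)
  have "measure (MN \<Otimes>\<^sub>M M) B = integral\<^sup>L M g"
    unfolding measure_def em using gnn by simp
  then show ?thesis unfolding B_def[symmetric] Ig
    by (simp add: sum_divide_distrib)
qed

end

theorem proposition3:
  fixes M :: "'a measure" and X :: "nat \<Rightarrow> 'a \<Rightarrow> int"
    and MN :: "'b measure" and X0 :: "'b \<Rightarrow> int"
    and N :: nat and y :: "nat \<Rightarrow> int"
  assumes "prob_space M"
    and "prob_space.indep_vars M (\<lambda>_. count_space UNIV) X {1..}"
    and "\<forall>j\<ge>1. distr M (count_space UNIV) (X j) = distr M (count_space UNIV) (X 1)"
    and "prob_space MN"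
    and "X0 \<in> measurable MN (count_space UNIV)"
    and "distr MN (count_space UNIV) X0 = measure_pmf (pmf_of_set {0..<int N})"
    and "N \<ge> 2"
    and "\<forall>n\<in>{1..<N}. \<bar>y n - y (Suc n)\<bar> \<le> 1"
  shows "1 / (\<Sum>i<N. pmax M X N i)
           \<le> measure (MN \<Otimes>\<^sub>M M)
               {(x, \<omega>) \<in> space (MN \<Otimes>\<^sub>M M).
                  \<exists>n\<in>{1..N}. (X0 x + psum X n \<omega>) mod int N = y n mod int N}
        \<and> measure (MN \<Otimes>\<^sub>M M)
               {(x, \<omega>) \<in> space (MN \<Otimes>\<^sub>M M).
                  \<exists>n\<in>{1..N}. (X0 x + psum X n \<omega>) mod int N = y n mod int N}
           \<le> 2 / (\<Sum>i<N. qmin M X N i)"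
proof -
  interpret setting M X N y
  proof (intro setting.intro iidw.intro iidw_axioms.intro setting_axioms.intro)
    show "prob_space M" by (rule assms(1))
    show "prob_space.indep_vars M (\<lambda>_. count_space UNIV) X {1..}" by (rule assms(2))
    show "\<forall>j\<ge>1. distr M (count_space UNIV) (X j) = distr M (count_space UNIV) (X 1)" by (rule assms(3))
    show "2 \<le> N" by (rule assms(7))
    show "\<forall>n\<in>{1..<N}. \<bar>y n - y (Suc n)\<bar> \<le> 1" by (rule assms(8))
  qed
  note PAeq = PA[OF assms(4,5,6)]
  define EG where "EG = (\<Sum>k\<in>{1..N}. prob (Gev k))"
  have Npos: "real N > 0" using assms(7) by simp
  have Sp: "1 \<le> (\<Sum>i<N. pmax M X N i)"
  proof -
    have "(\<Sum>i\<in>{0}. pmax M X N i) \<le> (\<Sum>i<N. pmax M X N i)"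
      using assms(7) by (intro sum_mono2) (auto intro: p_nonneg)
    then show ?thesis by (simp add: pmax_def)
  qed
  have Sq: "1 \<le> (\<Sum>i<N. qmin M X N i)"
  proof -
    have "(\<Sum>i\<in>{0}. qmin M X N i) \<le> (\<Sum>i<N. qmin M X N i)"
      using assms(7) by (intro sum_mono2) (auto intro: q_nonneg)
    then show ?thesis by (simp add: qmin_def)
  qed
  have lo: "real N \<le> EG * (\<Sum>i<N. pmax M X N i)" unfolding EG_def by (rule lower)
  have up: "EG * (\<Sum>i<N. qmin M X N i) \<le> 2 * real N" unfolding EG_def by (rule upper)
  have "1 / (\<Sum>i<N. pmax M X N i) \<le> EG / real N"
    using lo Sp Npos by (simp add: divide_simps)
  moreover have "EG / real N \<le> 2 / (\<Sum>i<N. qmin M X N i)"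
    using up Sq Npos by (simp add: divide_simps)
  ultimately show ?thesis unfolding PAeq EG_def by simp
qed

end
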